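(* Let $k\ge 1$ and $n\ge 100k$ be integers, and let $G$ be an $n$-vertex bipartite graph with minimum degree $\delta(G)>\frac{2}{5}n$. Let $u,v$ be two distinct vertices of $G$. Then: (a) if $v$ and $u$ lie in the same part of the bipartition, then for each $h\in\{3,5,\dots,2k+1\}$ there is a path from $v$ to $u$ with exactly $h$ vertices; (b) if $v$ and $u$ lie in different parts, then for each $s\in\{4,6,\dots,2k+2\}$ there is a path from $v$ to $u$ with exactly $s$ vertices.
   Context: The order of a path is its number of vertices. *)

theory Defs
  imports Complex_Main
begin

definition simple_graph :: "'a set \<Rightarrow> ('a \<Rightarrow> 'a \<Rightarrow> bool) \<Rightarrow> bool" where
  "simple_graph V E \<longleftrightarrow> finite V \<and> (\<forall>x y. E x y \<longrightarrow> x \<in> V \<and> y \<in> V)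
     \<and> (\<forall>x y. E x y \<longrightarrow> E y x) \<and> (\<forall>x. \<not> E x x)"

definition bipartition :: "'a set \<Rightarrow> ('a \<Rightarrow> 'a \<Rightarrow> bool) \<Rightarrow> 'a set \<Rightarrow> 'a set \<Rightarrow> bool" where
  "bipartition V E A B \<longleftrightarrow> A \<union> B = V \<and> A \<inter> B = {}
     \<and> (\<forall>x y. E x y \<longrightarrow> (x \<in> A \<and> y \<in> B) \<or> (x \<in> B \<and> y \<in> A))"

definition degree :: "'a set \<Rightarrow> ('a \<Rightarrow> 'a \<Rightarrow> bool) \<Rightarrow> 'a \<Rightarrow> nat" where
  "degree V E x = card {y \<in> V. E x y}"

text \<open>A path given by its list of vertices; its order is the number of vertices.\<close>
definition is_path :: "'a set \<Rightarrow> ('a \<Rightarrow> 'a \<Rightarrow> bool) \<Rightarrow> 'a list \<Rightarrow> bool" where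
  "is_path V E p \<longleftrightarrow> p \<noteq> [] \<and> set p \<subseteq> V \<and> distinct p
     \<and> (\<forall>i. Suc i < length p \<longrightarrow> E (p ! i) (p ! Suc i))"

end

theory Submission
  imports Defs
begin

lemma path_cons:
  assumes "is_path V E p" "x \<in> V" "x \<notin> set p" "E x (hd p)"
  shows "is_path V E (x # p)"
proof -
  have ne: "p \<noteq> []" using assms(1) by (simp add: is_path_def)
  then have h: "hd p = p ! 0" by (simp add: hd_conv_nth)
  show ?thesis unfolding is_path_def
  proof (intro conjI allI impI)
    show "x # p \<noteq> []" by simp
    show "set (x # p) \<subseteq> V" using assms(1,2) by (auto simp: is_path_def)
    show "distinct (x # p)" using assms(1,3) by (auto simp: is_path_def)
  next
    fix i assume i: "Suc i < length (x # p)"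
    show "E ((x # p) ! i) ((x # p) ! Suc i)"
    proof (cases i)
      case 0 then show ?thesis using assms(4) h by simp
    next
      case (Suc j) then show ?thesis using assms(1) i by (simp add: is_path_def)
    qed
  qed
qed

lemma path_snoc:
  assumes "is_path V E p" "y \<in> V" "y \<notin> set p" "E (last p) y"
  shows "is_path V E (p @ [y])"
proof -
  have ne: "p \<noteq> []" using assms(1) by (simp add: is_path_def)
  then have h: "last p = p ! (length p - 1)" by (simp add: last_conv_nth)
  show ?thesis unfolding is_path_def
  proof (intro conjI allI impI)
    show "p @ [y] \<noteq> []" by simp
    show "set (p @ [y]) \<subseteq> V" using assms(1,2) by (auto simp: is_path_def)
    show "distinct (p @ [y])" using assms(1,3) by (auto simp: is_path_def)
  next
    fix i assume i: "Suc i < length (p @ [y])"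
    show "E ((p @ [y]) ! i) ((p @ [y]) ! Suc i)"
    proof (cases "Suc i < length p")
      case True then show ?thesis using assms(1) by (simp add: is_path_def nth_append)
    next
      case False
      then have "i = length p - 1" using i by simp
      then show ?thesis using assms(4) h ne False by (simp add: nth_append)
    qed
  qed
qed

lemma avoid:
  assumes "finite F" "card F < card X"
  shows "\<exists>z\<in>X. z \<notin> F"
  using assms by (metis card_mono not_le subsetI)

lemma card_ins2: "finite F \<Longrightarrow> card (insert a F) \<le> card F + 1"
  by (simp add: card_insert_if)

lemma common_nbrs:
  assumes sg: "simple_graph V E" and bp: "bipartition V E A B" and cV: "card V = n"
    and deg: "\<forall>x\<in>V. real (degree V E x) > 2 / 5 * real n"
    and x: "x \<in> A" and y: "y \<in> A"
  shows "real (card {z\<in>V. E x z \<and> E y z}) > real n / 5"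
proof -
  define Nx where "Nx = {z\<in>V. E x z}"
  define Ny where "Ny = {z\<in>V. E y z}"
  have fV: "finite V" using sg by (simp add: simple_graph_def)
  have AV: "A \<subseteq> V" and BV: "B \<subseteq> V" and AB: "A \<inter> B = {}" and UV: "A \<union> B = V"
    using bp by (auto simp: bipartition_def)
  have edge: "\<And>a b. E a b \<Longrightarrow> (a \<in> A \<and> b \<in> B) \<or> (a \<in> B \<and> b \<in> A)"
    using bp by (simp add: bipartition_def)
  have NxB: "Nx \<subseteq> B" using x AB edge unfolding Nx_def by blast
  have NyB: "Ny \<subseteq> B" using y AB edge unfolding Ny_def by blast
  have fB: "finite B" using fV BV finite_subset by blast
  have fA: "finite A" using fV AV finite_subset by blast
  have cNx: "real (card Nx) > 2/5 * real n" using deg x AV unfolding Nx_def degree_def by auto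
  have cNy: "real (card Ny) > 2/5 * real n" using deg y AV unfolding Ny_def degree_def by auto
  have "card Nx > 0" using cNx by (metis of_nat_0 of_nat_0_le_iff gr0I less_le_not_le mult_nonneg_nonneg zero_le_divide_iff zero_le_numeral)
  then obtain b where b: "b \<in> Nx" by (metis card.empty equals0I less_irrefl)
  then have bB: "b \<in> B" using NxB by blast
  define Nb where "Nb = {z\<in>V. E b z}"
  have NbA: "Nb \<subseteq> A" using bB AB edge unfolding Nb_def by blast
  have cNb: "real (card Nb) > 2/5 * real n" using deg bB BV unfolding Nb_def degree_def by auto
  have "card Nb \<le> card A" using NbA fA card_mono by blast
  moreover have "card A + card B = n" using card_Un_disjoint[OF fA fB AB] UV cV by simp
  moreover have "card (Nx \<union> Ny) \<le> card B" using NxB NyB fB card_mono by (metis Un_subset_iff)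
  moreover have "card (Nx \<union> Ny) + card (Nx \<inter> Ny) = card Nx + card Ny"
    using card_Un_Int[of Nx Ny] NxB NyB fB finite_subset by metis
  moreover have "Nx \<inter> Ny = {z\<in>V. E x z \<and> E y z}" unfolding Nx_def Ny_def by blast
  ultimately have r1: "real (card Nb) \<le> real (card A)" and r2: "real (card A) + real (card B) = real n"
    and r3: "real (card (Nx \<union> Ny)) \<le> real (card B)"
    and r4: "real (card (Nx \<union> Ny)) + real (card {z\<in>V. E x z \<and> E y z}) = real (card Nx) + real (card Ny)"
    by (metis of_nat_le_iff, metis of_nat_add of_nat_eq_iff, metis of_nat_le_iff, metis of_nat_add)
  show ?thesis using r1 r2 r3 r4 cNx cNy cNb by linarith
qed

lemma bip_swap: "bipartition V E A B \<Longrightarrow> bipartition V E B A"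
  unfolding bipartition_def by blast

lemma common_nbrs2:
  assumes sg: "simple_graph V E" and bp: "bipartition V E A B" and cV: "card V = n"
    and deg: "\<forall>x\<in>V. real (degree V E x) > 2 / 5 * real n"
    and xy: "(x \<in> A \<and> y \<in> A) \<or> (x \<in> B \<and> y \<in> B)"
  shows "real (card {z\<in>V. E x z \<and> E y z}) > real n / 5"
  using xy common_nbrs[OF sg bp cV deg] common_nbrs[OF sg bip_swap[OF bp] cV deg] by blast

lemma core:
  assumes sg: "simple_graph V E" and bp: "bipartition V E A B" and cV: "card V = n"
    and deg: "\<forall>x\<in>V. real (degree V E x) > 2 / 5 * real n"
  shows "\<And>x y F. x \<in> V \<Longrightarrow> y \<in> V \<Longrightarrow> x \<noteq> y \<Longrightarrow> (x \<in> A \<and> y \<in> A) \<or> (x \<in> B \<and> y \<in> B)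
    \<Longrightarrow> finite F \<Longrightarrow> x \<notin> F \<Longrightarrow> y \<notin> F \<Longrightarrow> real (card F) + 2 * real m \<le> real n / 5 \<Longrightarrow> m \<ge> 1
    \<Longrightarrow> \<exists>p. is_path V E p \<and> length p = 2*m+1 \<and> hd p = x \<and> last p = y \<and> set p \<inter> F = {}"
proof (induction m)
  case 0 then show ?case by simp
next
  case (Suc m)
  have fV: "finite V" using sg by (simp add: simple_graph_def)
  have EV: "\<And>a b. E a b \<Longrightarrow> a \<in> V \<and> b \<in> V" using sg by (simp add: simple_graph_def)
  have irr: "\<And>a. \<not> E a a" using sg by (simp add: simple_graph_def)
  have sym: "\<And>a b. E a b \<Longrightarrow> E b a" using sg by (simp add: simple_graph_def)
  have AB: "A \<inter> B = {}" using bp by (simp add: bipartition_def)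
  have edge: "\<And>a b. E a b \<Longrightarrow> (a \<in> A \<and> b \<in> B) \<or> (a \<in> B \<and> b \<in> A)"
    using bp by (simp add: bipartition_def)
  show ?case
  proof (cases "m = 0")
    case True
    have "real (card {z\<in>V. E x z \<and> E y z}) > real n / 5"
      using common_nbrs2[OF sg bp cV deg Suc.prems(4)] .
    then have "card F < card {z\<in>V. E x z \<and> E y z}" using Suc.prems(8) by simp
    then obtain z where z: "z \<in> V" "E x z" "E y z" "z \<notin> F" using avoid[OF Suc.prems(5)] by blast
    have "x \<noteq> z" "y \<noteq> z" using z irr by auto
    then have "is_path V E [x, z, y]" using z Suc.prems(1,2,3) sym
      unfolding is_path_def by (auto simp: less_Suc_eq nth_Cons split: nat.splits)
    then show ?thesis using True z Suc.prems(6,7) by (intro exI[of _ "[x,z,y]"]) auto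
  next
    case False
    have cF: "real (card F) + 2 \<le> real n / 5" using Suc.prems(8) by simp
    have dx: "real (card {z\<in>V. E x z}) > 2/5 * real n" using deg Suc.prems(1) by (simp add: degree_def)
    have "card (insert y F) \<le> card F + 1" using card_ins2[OF Suc.prems(5)] .
    then have "card (insert y F) < card {z\<in>V. E x z}" using dx cF by linarith
    then obtain z where z: "z \<in> V" "E x z" "z \<noteq> y" "z \<notin> F"
      using avoid[of "insert y F"] Suc.prems(5) by blast
    have dz: "real (card {w\<in>V. E z w}) > 2/5 * real n" using deg z(1) by (simp add: degree_def)
    have "card (insert x (insert y F)) \<le> card F + 2"
      using card_ins2[of "insert y F" x] card_ins2[OF Suc.prems(5), of y] Suc.prems(5) by simp
    then have "card (insert x (insert y F)) < card {w\<in>V. E z w}" using dz cF by linarith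
    then obtain w where w: "w \<in> V" "E z w" "w \<noteq> x" "w \<noteq> y" "w \<notin> F"
      using avoid[of "insert x (insert y F)"] Suc.prems(5) by blast
    have wz: "w \<noteq> z" using w irr by auto
    have xz: "x \<noteq> z" using z irr by auto
    have side: "(w \<in> A \<and> y \<in> A) \<or> (w \<in> B \<and> y \<in> B)"
      using Suc.prems(4) edge[OF z(2)] edge[OF w(2)] AB by blast
    define F' where "F' = insert x (insert z F)"
    have "real (card F') \<le> real (card F) + 2"
      using card_ins2[of "insert z F" x] card_ins2[OF Suc.prems(5), of z] Suc.prems(5)
      unfolding F'_def by simp
    then have b: "real (card F') + 2 * real m \<le> real n / 5" using Suc.prems(8) by simp
    have "finite F'" using Suc.prems(5) by (simp add: F'_def)
    moreover have "w \<notin> F'" "y \<notin> F'" using w wz z Suc.prems(3,7) by (auto simp: F'_def)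
    ultimately obtain p where p: "is_path V E p" "length p = 2*m+1" "hd p = w" "last p = y"
      "set p \<inter> F' = {}"
      using Suc.IH[OF w(1) Suc.prems(2) w(4) side _ _ _ b] False by auto
    have "p \<noteq> []" using p(2) by auto
    have pz: "is_path V E (z # p)" using path_cons[OF p(1) z(1)] p(3,5) w(2) by (auto simp: F'_def)
    have px: "is_path V E (x # z # p)" using path_cons[OF pz Suc.prems(1)] p(5) xz z(2)
      by (auto simp: F'_def)
    show ?thesis using px p \<open>p \<noteq> []\<close> z(4) Suc.prems(6)
      by (intro exI[of _ "x # z # p"]) (auto simp: F'_def)
  qed
qed

theorem lemma3p1:
  fixes V :: "'a set" and E :: "'a \<Rightarrow> 'a \<Rightarrow> bool" and A B :: "'a set"
    and k n :: nat and u v :: 'a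
  assumes "simple_graph V E"
    and "bipartition V E A B"
    and "card V = n"
    and "k \<ge> 1" and "n \<ge> 100 * k"
    and "\<forall>x\<in>V. real (degree V E x) > 2 / 5 * real n"
    and "u \<in> V" and "v \<in> V" and "u \<noteq> v"
  shows "(((u \<in> A \<and> v \<in> A) \<or> (u \<in> B \<and> v \<in> B)) \<longrightarrow>
           (\<forall>h \<in> {3..2*k+1}. odd h \<longrightarrow>
              (\<exists>p. is_path V E p \<and> length p = h \<and> hd p = v \<and> last p = u))) \<and>
         (((u \<in> A \<and> v \<in> B) \<or> (u \<in> B \<and> v \<in> A)) \<longrightarrow>
           (\<forall>s \<in> {4..2*k+2}. even s \<longrightarrow>
              (\<exists>p. is_path V E p \<and> length p = s \<and> hd p = v \<and> last p = u)))"
proof -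
  note sg = assms(1) and bp = assms(2) and cV = assms(3) and deg = assms(6)
  have irr: "\<And>a. \<not> E a a" using sg by (simp add: simple_graph_def)
  have AB: "A \<inter> B = {}" using bp by (simp add: bipartition_def)
  have edge: "\<And>a b. E a b \<Longrightarrow> (a \<in> A \<and> b \<in> B) \<or> (a \<in> B \<and> b \<in> A)"
    using bp by (simp add: bipartition_def)
  have nk: "real n \<ge> 100 * real k" using assms(5) by (metis of_nat_le_iff of_nat_mult of_nat_numeral)
  have k1: "real k \<ge> 1" using assms(4) by simp
  show ?thesis
  proof (intro conjI impI ballI)
    fix h assume same: "(u \<in> A \<and> v \<in> A) \<or> (u \<in> B \<and> v \<in> B)" and h: "h \<in> {3..2*k+1}" and oh: "odd h"
    define m where "m = h div 2"
    have hm: "h = 2*m+1" using oh m_def by presburger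
    have m1: "m \<ge> 1" "m \<le> k" using h hm by auto
    have "real m \<le> real k" using m1 by simp
    then have b: "real (card ({}::'a set)) + 2 * real m \<le> real n / 5" using nk by simp
    have "(v \<in> A \<and> u \<in> A) \<or> (v \<in> B \<and> u \<in> B)" using same by blast
    from core[OF sg bp cV deg assms(8,7) assms(9)[symmetric] this _ _ _ b m1(1)]
    show "\<exists>p. is_path V E p \<and> length p = h \<and> hd p = v \<and> last p = u" using hm by auto
  next
    fix s assume diff: "(u \<in> A \<and> v \<in> B) \<or> (u \<in> B \<and> v \<in> A)" and s: "s \<in> {4..2*k+2}" and es: "even s"
    define m where "m = (s - 2) div 2"
    have sm: "s = 2*m+2" using es s m_def by auto
    have m1: "m \<ge> 1" "m \<le> k" using s sm by auto
    have "real m \<le> real k" using m1 by simp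
    then have b: "real (card {u}) + 2 * real m \<le> real n / 5" using nk k1 by simp
    have du: "real (card {w\<in>V. E u w}) > 2/5 * real n" using deg assms(7) by (simp add: degree_def)
    then have "card {v} < card {w\<in>V. E u w}" using nk k1 by simp
    then obtain w where w: "w \<in> V" "E u w" "w \<noteq> v" using avoid[of "{v}"] by auto
    have wu: "w \<noteq> u" using w irr by auto
    have side: "(v \<in> A \<and> w \<in> A) \<or> (v \<in> B \<and> w \<in> B)" using diff edge[OF w(2)] AB by blast
    obtain p where p: "is_path V E p" "length p = 2*m+1" "hd p = v" "last p = w" "set p \<inter> {u} = {}"
      using core[OF sg bp cV deg assms(8) w(1) w(3)[symmetric] side _ _ _ b m1(1)] assms(9) wu by auto
    have ne: "p \<noteq> []" using p(2) by auto
    have sym: "E w u" using sg w(2) by (simp add: simple_graph_def)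
    have "is_path V E (p @ [u])" using path_snoc[OF p(1) assms(7)] p(4,5) sym by auto
    then show "\<exists>p. is_path V E p \<and> length p = s \<and> hd p = v \<and> last p = u"
      using p ne sm by (intro exI[of _ "p @ [u]"]) auto
  qed
qed

end
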